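(* If $\mathbb S[\boldsymbol\kappa]$ is an unstable-negative feedback, then $\mathbb S[\boldsymbol\kappa]$ is a Hurwitz-unstable $P^-_0$ matrix.
   Context: For a reaction network with reactant coefficients $s^j_m$ and stoichiometric matrix $\mathbb S$, a $k$-Child-Selection $\boldsymbol\kappa=(\kappa,E_\kappa,J)$ is a bijection $J:\kappa\to E_\kappa$ between $k$ species and $k$ reactions with $s^{J(m)}_m>0$; its CS-matrix is $\mathbb S[\boldsymbol\kappa]_{ml}=\mathbb S_{m,J(l)}$. Hurwitz-unstable: some eigenvalue has positive real part. An unstable core is a Hurwitz-unstable CS-matrix with no Hurwitz-unstable proper principal submatrix; a $k\times k$ unstable core is an unstable-negative feedback if $\operatorname{sign}\det=(-1)^{k}$. A $P^-_0$ matrix is one whose every nonzero $j\times j$ principal minor has sign $(-1)^j$. *)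

theory Defs
  imports Complex_Main "HOL-Combinatorics.Permutations"
begin

text \<open>Matrices indexed by a finite set K of indices (species): A :: 'm => 'm => real,
  only entries with both indices in K matter.\<close>

definition det_on :: "'m set \<Rightarrow> ('m \<Rightarrow> 'm \<Rightarrow> real) \<Rightarrow> real" where
  "det_on K A = (\<Sum>p | p permutes K. of_int (sign p) * (\<Prod>i\<in>K. A i (p i)))"

definition eigenvalue_on :: "'m set \<Rightarrow> ('m \<Rightarrow> 'm \<Rightarrow> real) \<Rightarrow> complex \<Rightarrow> bool" where
  "eigenvalue_on K A \<mu> \<longleftrightarrow>
     (\<exists>v :: 'm \<Rightarrow> complex. (\<forall>i. i \<notin> K \<longrightarrow> v i = 0) \<and> (\<exists>i\<in>K. v i \<noteq> 0) \<and>
        (\<forall>i\<in>K. (\<Sum>j\<in>K. complex_of_real (A i j) * v j) = \<mu> * v i))"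

definition hurwitz_unstable :: "'m set \<Rightarrow> ('m \<Rightarrow> 'm \<Rightarrow> real) \<Rightarrow> bool" where
  "hurwitz_unstable K A \<longleftrightarrow> (\<exists>\<mu>. eigenvalue_on K A \<mu> \<and> Re \<mu> > 0)"

text \<open>Child-Selection: s j m is the reactant coefficient of species m in reaction j.\<close>
definition is_CS :: "('r \<Rightarrow> 'm \<Rightarrow> real) \<Rightarrow> 'm set \<Rightarrow> 'r set \<Rightarrow> ('m \<Rightarrow> 'r) \<Rightarrow> bool" where
  "is_CS s \<kappa> E J \<longleftrightarrow> finite \<kappa> \<and> bij_betw J \<kappa> E \<and> (\<forall>m\<in>\<kappa>. s (J m) m > 0)"

definition CS_matrix :: "('m \<Rightarrow> 'r \<Rightarrow> real) \<Rightarrow> ('m \<Rightarrow> 'r) \<Rightarrow> 'm \<Rightarrow> 'm \<Rightarrow> real" where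
  "CS_matrix S J = (\<lambda>m l. S m (J l))"

text \<open>Principal submatrices of the K-indexed matrix A are the L-indexed restrictions, L \<subseteq> K.\<close>
definition unstable_core :: "'m set \<Rightarrow> ('m \<Rightarrow> 'm \<Rightarrow> real) \<Rightarrow> bool" where
  "unstable_core K A \<longleftrightarrow> hurwitz_unstable K A \<and> (\<forall>L. L \<subset> K \<longrightarrow> \<not> hurwitz_unstable L A)"

definition unstable_negative_feedback :: "'m set \<Rightarrow> ('m \<Rightarrow> 'm \<Rightarrow> real) \<Rightarrow> bool" where
  "unstable_negative_feedback K A \<longleftrightarrow>
     unstable_core K A \<and> sgn (det_on K A) = (-1) ^ card K"

definition P0_minus :: "'m set \<Rightarrow> ('m \<Rightarrow> 'm \<Rightarrow> real) \<Rightarrow> bool" where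
  "P0_minus K A \<longleftrightarrow>
     (\<forall>L. L \<subseteq> K \<and> L \<noteq> {} \<and> det_on L A \<noteq> 0 \<longrightarrow> sgn (det_on L A) = (-1) ^ card L)"

end

theory Submission
  imports Defs "Jordan_Normal_Form.Determinant"
begin

lemma conj_facts:
  fixes f :: "nat \<Rightarrow> 'm" and L :: "'m set"
  assumes fb: "bij_betw f {0..<n} L"
  defines "g \<equiv> inv_into {0..<n} f"
  defines "cj \<equiv> (\<lambda>p x. if x \<in> L then f (p (g x)) else x)"
  assumes p: "p permutes {0..<n}"
  shows "cj p permutes L" "sign (cj p) = sign p"
proof -
  have fg: "\<And>x. x \<in> L \<Longrightarrow> f (g x) = x" unfolding g_def using fb by (simp add: bij_betw_inv_into_right)
  have gf: "\<And>i. i < n \<Longrightarrow> g (f i) = i" unfolding g_def using fb by (simp add: bij_betw_inv_into_left)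
  have gL: "\<And>x. x \<in> L \<Longrightarrow> g x < n" unfolding g_def using fb
    by (metis atLeastLessThan_iff bij_betw_def inv_into_into)
  have fL: "\<And>i. i < n \<Longrightarrow> f i \<in> L" using fb by (auto simp: bij_betw_def)
  have finj: "\<And>i j. i < n \<Longrightarrow> j < n \<Longrightarrow> f i = f j \<Longrightarrow> i = j" using gf by (metis)
  have perm: "cj q permutes L" if q: "q permutes {0..<n}" for q
  proof (rule bij_imp_permutes)
    have "bij_betw (f \<circ> q \<circ> g) L L"
    proof -
      have "bij_betw g L {0..<n}" using bij_betw_inv_into[OF fb] g_def by simp
      moreover have "bij_betw (f \<circ> q) {0..<n} L"
        using bij_betw_trans[OF permutes_imp_bij[OF q] fb] .
      ultimately show ?thesis using bij_betw_trans by (metis comp_assoc)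
    qed
    then show "bij_betw (cj q) L L"
      by (rule bij_betw_cong[THEN iffD1, rotated]) (auto simp: cj_def)
  qed (auto simp: cj_def)
  show "cj p permutes L" by (rule perm[OF p])
  have finL: "finite L" using fb bij_betw_finite by blast
  show "sign (cj p) = sign p"
    using p finite_atLeastLessThan[of 0 n]
  proof (induction p rule: permutes_induct)
    case id
    have "cj id = id" by (auto simp: cj_def fg)
    then show ?case by (simp add: id_def)
  next
    case (swap a b p)
    have ab: "a < n" "b < n" using swap by auto
    have swP: "p permutes {0..<n}" using swap by blast
    have swIH: "sign (cj p) = sign p" using swap by blast
    have swne: "a \<noteq> b" using swap by blast
    have eq: "cj (Transposition.transpose a b \<circ> p) = Transposition.transpose (f a) (f b) \<circ> cj p"
    proof
      fix x show "cj (Transposition.transpose a b \<circ> p) x = (Transposition.transpose (f a) (f b) \<circ> cj p) x"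
      proof (cases "x \<in> L")
        case True
        define y where "y = p (g x)"
        have pr: "y < n" unfolding y_def using permutes_in_image[OF swP, of "g x"] gL[OF True] by simp
        have key: "Transposition.transpose (f a) (f b) (f y) = f (Transposition.transpose a b y)"
        proof (cases "y = a")
          case True then show ?thesis by simp
        next
          case ya: False
          show ?thesis
          proof (cases "y = b")
            case True then show ?thesis by simp
          next
            case False
            have "f y \<noteq> f a" using ya finj[OF pr ab(1)] by blast
            moreover have "f y \<noteq> f b" using False finj[OF pr ab(2)] by blast
            ultimately show ?thesis using ya False by simp
          qed
        qed
        show ?thesis using True key unfolding cj_def y_def by simp
      next
        case False
        then have "x \<noteq> f a" "x \<noteq> f b" using fL ab by auto
        then show ?thesis using False by (auto simp: cj_def Transposition.transpose_def)
      qed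
    qed
    have "f a \<noteq> f b" using finj[OF ab] swne by blast
    moreover have "permutation (cj p)" using perm[OF swP] finL permutation_permutes by blast
    ultimately have s1: "sign (Transposition.transpose (f a) (f b) \<circ> cj p) = - sign p"
      using sign_compose[OF permutation_swap_id, of "cj p" "f a" "f b"] sign_swap_id[of "f a" "f b"] swIH
      by simp
    have s2: "sign (Transposition.transpose a b \<circ> p) = - sign p"
      using sign_compose[OF permutation_swap_id permutes_imp_permutation[OF _ swP], of a b] sign_swap_id[of a b] swne
      by simp
    show ?case unfolding eq s1 s2 ..
  qed
qed

lemma det_transport:
  fixes f :: "nat \<Rightarrow> 'm" and L :: "'m set" and B :: "'m \<Rightarrow> 'm \<Rightarrow> real"
  assumes fb: "bij_betw f {0..<n} L"
  shows "det (mat n n (\<lambda>(i,j). B (f i) (f j))) = det_on L B"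
proof -
  define g where "g = inv_into {0..<n} f"
  define cj where "cj = (\<lambda>p x. if x \<in> L then f (p (g x)) else x)"
  define bk where "bk = (\<lambda>q k. if k < n then g (q (f k)) else k)"
  have fg: "\<And>x. x \<in> L \<Longrightarrow> f (g x) = x" unfolding g_def using fb by (simp add: bij_betw_inv_into_right)
  have gf: "\<And>i. i < n \<Longrightarrow> g (f i) = i" unfolding g_def using fb by (simp add: bij_betw_inv_into_left)
  have gL: "\<And>x. x \<in> L \<Longrightarrow> g x < n" unfolding g_def using fb
    by (metis atLeastLessThan_iff bij_betw_def inv_into_into)
  have fL: "\<And>i. i < n \<Longrightarrow> f i \<in> L" using fb by (auto simp: bij_betw_def)
  have gb: "bij_betw g L {0..<n}" using bij_betw_inv_into[OF fb] g_def by simp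
  have cjf: "cj p (f k) = f (p k)" if "k < n" for p k using that fL gf by (simp add: cj_def)
  have "det_on L B = (\<Sum>q\<in>{q. q permutes L}. of_int (sign q) * (\<Prod>i\<in>L. B i (q i)))"
    unfolding det_on_def by simp
  also have "\<dots> = (\<Sum>p\<in>{p. p permutes {0..<n}}. of_int (sign (cj p)) * (\<Prod>i\<in>L. B i (cj p i)))"
  proof (rule sum.reindex_bij_witness[where i = cj and j = bk])
    fix q assume q: "q \<in> {q. q permutes L}"
    then have qL: "\<And>x. x \<in> L \<Longrightarrow> q x \<in> L" "\<And>x. x \<notin> L \<Longrightarrow> q x = x"
      by (auto simp: permutes_in_image permutes_not_in)
    have cb: "cj (bk q) = q"
    proof
      fix x show "cj (bk q) x = q x"
        by (cases "x \<in> L") (auto simp: cj_def bk_def gL fg qL)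
    qed
    then show "cj (bk q) = q" .
    show "of_int (sign (cj (bk q))) * (\<Prod>i\<in>L. B i (cj (bk q) i)) = of_int (sign q) * (\<Prod>i\<in>L. B i (q i))"
      by (simp add: cb)
    have "bij_betw (g \<circ> q \<circ> f) {0..<n} {0..<n}"
    proof -
      have "bij_betw (q \<circ> f) {0..<n} L" using bij_betw_trans[OF fb permutes_imp_bij] q by auto
      then show ?thesis using bij_betw_trans[OF _ gb] by (metis comp_assoc)
    qed
    then have "bij_betw (bk q) {0..<n} {0..<n}"
      by (rule bij_betw_cong[THEN iffD1, rotated]) (auto simp: bk_def)
    then show "bk q \<in> {p. p permutes {0..<n}}"
      by (auto intro!: bij_imp_permutes simp: bk_def)
  next
    fix p assume p: "p \<in> {p. p permutes {0..<n}}"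
    then have pn: "\<And>k. k < n \<Longrightarrow> p k < n" "\<And>k. \<not> k < n \<Longrightarrow> p k = k"
      by (auto simp: permutes_in_image permutes_not_in)
    show "bk (cj p) = p"
    proof
      fix k show "bk (cj p) k = p k"
        by (cases "k < n") (auto simp: cj_def bk_def gf fL pn)
    qed
    show "cj p \<in> {q. q permutes L}" using conj_facts(1)[OF fb] p unfolding cj_def g_def by auto
  qed
  also have "\<dots> = (\<Sum>p\<in>{p. p permutes {0..<n}}. of_int (sign p) * (\<Prod>k\<in>{0..<n}. B (f k) (f (p k))))"
  proof (rule sum.cong[OF refl])
    fix p assume p: "p \<in> {p. p permutes {0..<n}}"
    have "sign (cj p) = sign p" using conj_facts(2)[OF fb] p unfolding cj_def g_def by auto
    moreover have "(\<Prod>i\<in>L. B i (cj p i)) = (\<Prod>k\<in>{0..<n}. B (f k) (cj p (f k)))"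
      using prod.reindex_bij_betw[OF fb, of "\<lambda>i. B i (cj p i)"] by simp
    moreover have "\<dots> = (\<Prod>k\<in>{0..<n}. B (f k) (f (p k)))"
      by (rule prod.cong) (auto simp: cjf)
    ultimately show "of_int (sign (cj p)) * (\<Prod>i\<in>L. B i (cj p i)) = of_int (sign p) * (\<Prod>k\<in>{0..<n}. B (f k) (f (p k)))"
      by simp
  qed
  also have "\<dots> = det (mat n n (\<lambda>(i,j). B (f i) (f j)))"
    unfolding det_def
    by (auto intro!: sum.cong prod.cong simp: permutes_in_image)
  finally show ?thesis by simp
qed

lemma det_on_zero_kernel:
  fixes L :: "'m set" and B :: "'m \<Rightarrow> 'm \<Rightarrow> real"
  assumes fin: "finite L" and d: "det_on L B = 0"
  shows "\<exists>v::'m\<Rightarrow>real. (\<forall>i. i \<notin> L \<longrightarrow> v i = 0) \<and> (\<exists>i\<in>L. v i \<noteq> 0) \<and>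
           (\<forall>i\<in>L. (\<Sum>j\<in>L. B i j * v j) = 0)"
proof -
  define n where "n = card L"
  obtain f where fb: "bij_betw f {0..<n} L" using ex_bij_betw_nat_finite[OF fin] n_def by blast
  define g where "g = inv_into {0..<n} f"
  have fg: "\<And>x. x \<in> L \<Longrightarrow> f (g x) = x" unfolding g_def using fb by (simp add: bij_betw_inv_into_right)
  have gf: "\<And>i. i < n \<Longrightarrow> g (f i) = i" unfolding g_def using fb by (simp add: bij_betw_inv_into_left)
  have gL: "\<And>x. x \<in> L \<Longrightarrow> g x < n" unfolding g_def using fb
    by (metis atLeastLessThan_iff bij_betw_def inv_into_into)
  have fL: "\<And>i. i < n \<Longrightarrow> f i \<in> L" using fb by (auto simp: bij_betw_def)
  define M where "M = mat n n (\<lambda>(i,j). B (f i) (f j))"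
  have M: "M \<in> carrier_mat n n" unfolding M_def by simp
  have "det M = 0" using det_transport[OF fb, of B] d unfolding M_def by simp
  then obtain w where w: "w \<in> carrier_vec n" "w \<noteq> 0\<^sub>v n" "M *\<^sub>v w = 0\<^sub>v n"
    using det_0_iff_vec_prod_zero_field[OF M] by blast
  define v where "v = (\<lambda>x. if x \<in> L then w $ (g x) else 0)"
  have "\<exists>k<n. w $ k \<noteq> 0"
  proof (rule ccontr)
    assume "\<not> ?thesis"
    then have "w = 0\<^sub>v n" using w(1) by (intro eq_vecI) auto
    then show False using w(2) by simp
  qed
  then obtain k where k: "k < n" "w $ k \<noteq> 0" by blast
  have "v (f k) \<noteq> 0" using k fL gf by (simp add: v_def)
  then have ex: "\<exists>i\<in>L. v i \<noteq> 0" using fL k by blast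
  have ker: "(\<Sum>j\<in>L. B i j * v j) = 0" if i: "i \<in> L" for i
  proof -
    have "(\<Sum>j\<in>L. B i j * v j) = (\<Sum>k\<in>{0..<n}. B i (f k) * v (f k))"
      using sum.reindex_bij_betw[OF fb, of "\<lambda>j. B i j * v j"] by simp
    also have "\<dots> = (\<Sum>k\<in>{0..<n}. M $$ (g i, k) * w $ k)"
      using fL gf gL[OF i] fg[OF i] by (intro sum.cong) (auto simp: v_def M_def)
    also have "\<dots> = (M *\<^sub>v w) $ (g i)"
      using M w(1) gL[OF i] by (simp add: scalar_prod_def)
    also have "\<dots> = 0" using w(3) gL[OF i] by simp
    finally show ?thesis .
  qed
  show ?thesis using ex ker by (intro exI[of _ v]) (auto simp: v_def)
qed

lemma det_on_id:
  fixes L :: "'m set"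
  assumes fin: "finite L"
  shows "det_on L (\<lambda>i j. if i = j then 1 else 0) = 1"
proof -
  define n where "n = card L"
  obtain f where fb: "bij_betw f {0..<n} L" using ex_bij_betw_nat_finite[OF fin] n_def by blast
  have finj: "\<And>i j. i < n \<Longrightarrow> j < n \<Longrightarrow> f i = f j \<longleftrightarrow> i = j"
    using fb unfolding bij_betw_def inj_on_def by auto
  have "mat n n (\<lambda>(i,j). (\<lambda>i j. if i = j then 1 else (0::real)) (f i) (f j)) = 1\<^sub>m n"
    by (rule eq_matI) (auto simp: finj)
  then show ?thesis using det_transport[OF fb, of "\<lambda>i j. if i = j then 1 else 0"] by simp
qed

lemma det_on_scale:
  fixes L :: "'m set" and B :: "'m \<Rightarrow> 'm \<Rightarrow> real"
  shows "det_on L (\<lambda>i j. c * B i j) = c ^ card L * det_on L B"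
  unfolding det_on_def by (simp add: prod.distrib sum_distrib_left mult_ac)

lemma det_on_cont:
  fixes L :: "'m set" and A :: "'m \<Rightarrow> 'm \<Rightarrow> real"
  shows "continuous_on S (\<lambda>t. det_on L (\<lambda>i j. (1 - t) * (if i = j then 1 else 0) - t * A i j))"
  unfolding det_on_def by (intro continuous_intros)

lemma stable_sign:
  fixes L :: "'m set" and A :: "'m \<Rightarrow> 'm \<Rightarrow> real"
  assumes fin: "finite L" and st: "\<not> hurwitz_unstable L A" and nz: "det_on L A \<noteq> 0"
  shows "sgn (det_on L A) = (-1) ^ card L"
proof (rule ccontr)
  assume neg: "sgn (det_on L A) \<noteq> (-1) ^ card L"
  define \<phi> where "\<phi> = (\<lambda>t. det_on L (\<lambda>i j. (1 - t) * (if i = j then 1 else 0) - t * A i j))"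
  have p0: "\<phi> 0 = 1" unfolding \<phi>_def using det_on_id[OF fin] by simp
  have "\<phi> 1 = det_on L (\<lambda>i j. (-1) * A i j)" unfolding \<phi>_def by simp
  also have "\<dots> = (-1) ^ card L * det_on L A" by (rule det_on_scale)
  finally have p1: "\<phi> 1 = (-1) ^ card L * det_on L A" .
  have "\<phi> 1 < 0"
  proof (cases "even (card L)")
    case True
    then have "det_on L A < 0" using neg nz by (auto simp: sgn_if split: if_splits)
    then show ?thesis using p1 True by simp
  next
    case False
    then have "det_on L A > 0" using neg nz by (auto simp: sgn_if split: if_splits)
    then show ?thesis using p1 False by simp
  qed
  then obtain t where t: "0 \<le> t" "t \<le> 1" "\<phi> t = 0"
    using IVT2'[of \<phi> 1 0 0] p0 det_on_cont[of "{0..1}" L A] unfolding \<phi>_def[symmetric] by auto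
  have t0: "t > 0" using t p0 by (cases "t = 0") auto
  have t1: "t < 1" using t \<open>\<phi> 1 < 0\<close> by (cases "t = 1") auto
  define c where "c = (1 - t) / t"
  have c: "c > 0" using t0 t1 by (simp add: c_def)
  have "(\<lambda>i j. (1 - t) * (if i = j then 1 else 0) - t * A i j) =
        (\<lambda>i j. t * (c * (if i = j then 1 else 0) - A i j))"
    using t0 by (auto simp: c_def fun_eq_iff field_simps)
  then have "\<phi> t = t ^ card L * det_on L (\<lambda>i j. c * (if i = j then 1 else 0) - A i j)"
    unfolding \<phi>_def using det_on_scale by metis
  then have "det_on L (\<lambda>i j. c * (if i = j then 1 else 0) - A i j) = 0" using t(3) t0 by simp
  then obtain v :: "'m \<Rightarrow> real" where v: "\<forall>i. i \<notin> L \<longrightarrow> v i = 0" "\<exists>i\<in>L. v i \<noteq> 0"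
     "\<forall>i\<in>L. (\<Sum>j\<in>L. (c * (if i = j then 1 else 0) - A i j) * v j) = 0"
    using det_on_zero_kernel[OF fin] by blast
  have ev: "(\<Sum>j\<in>L. A i j * v j) = c * v i" if i: "i \<in> L" for i
  proof -
    have "(\<Sum>j\<in>L. (c * (if i = j then 1 else 0) - A i j) * v j) =
          (\<Sum>j\<in>L. (if i = j then c * v j else 0)) - (\<Sum>j\<in>L. A i j * v j)"
      unfolding sum_subtractf[symmetric] by (intro sum.cong) (auto simp: algebra_simps)
    also have "(\<Sum>j\<in>L. (if i = j then c * v j else 0)) = c * v i" using fin i by simp
    finally show ?thesis using v(3) i by simp
  qed
  have "eigenvalue_on L A (complex_of_real c)"
    unfolding eigenvalue_on_def
  proof (intro exI[of _ "\<lambda>i. complex_of_real (v i)"] conjI ballI allI impI)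
    show "\<And>i. i \<notin> L \<Longrightarrow> complex_of_real (v i) = 0" using v(1) by simp
    show "\<exists>i\<in>L. complex_of_real (v i) \<noteq> 0" using v(2) by simp
    fix i assume i: "i \<in> L"
    have "(\<Sum>j\<in>L. complex_of_real (A i j) * complex_of_real (v j)) = complex_of_real (\<Sum>j\<in>L. A i j * v j)"
      by simp
    also have "\<dots> = complex_of_real c * complex_of_real (v i)" using ev[OF i] by simp
    finally show "(\<Sum>j\<in>L. complex_of_real (A i j) * complex_of_real (v j)) = complex_of_real c * complex_of_real (v i)" .
  qed
  then have "hurwitz_unstable L A" unfolding hurwitz_unstable_def using c by force
  then show False using st by simp
qed

theorem mainTheorem13:
  fixes s :: "'r \<Rightarrow> 'm \<Rightarrow> real" and S :: "'m \<Rightarrow> 'r \<Rightarrow> real"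
    and \<kappa> :: "'m set" and E :: "'r set" and J :: "'m \<Rightarrow> 'r"
  assumes "is_CS s \<kappa> E J"
    and "unstable_negative_feedback \<kappa> (CS_matrix S J)"
  shows "hurwitz_unstable \<kappa> (CS_matrix S J) \<and> P0_minus \<kappa> (CS_matrix S J)"
proof -
  have fin: "finite \<kappa>" using assms(1) by (simp add: is_CS_def)
  have core: "unstable_core \<kappa> (CS_matrix S J)" and top: "sgn (det_on \<kappa> (CS_matrix S J)) = (-1) ^ card \<kappa>"
    using assms(2) by (auto simp: unstable_negative_feedback_def)
  have hu: "hurwitz_unstable \<kappa> (CS_matrix S J)" using core by (simp add: unstable_core_def)
  have "P0_minus \<kappa> (CS_matrix S J)"
    unfolding P0_minus_def
  proof (intro allI impI)
    fix L assume L: "L \<subseteq> \<kappa> \<and> L \<noteq> {} \<and> det_on L (CS_matrix S J) \<noteq> 0"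
    show "sgn (det_on L (CS_matrix S J)) = (-1) ^ card L"
    proof (cases "L = \<kappa>")
      case True then show ?thesis using top by simp
    next
      case False
      then have "L \<subset> \<kappa>" using L by blast
      then have "\<not> hurwitz_unstable L (CS_matrix S J)" using core by (simp add: unstable_core_def)
      moreover have "finite L" using L fin finite_subset by blast
      ultimately show ?thesis using stable_sign L by blast
    qed
  qed
  then show ?thesis using hu by simp
qed

end
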